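(* Let $a\ge 2$ be even and let $c$ be an integer with $0<c<\frac a2$. Then $U=\{(a,-a),(c,-c),(0,0)\}\subseteq\mathcal{B}$ is unavoidable.
   Context: The bicyclic inverse semigroup is $\mathcal{B}=\{(a,b)\in\mathbb{Z}\times\mathbb{Z}\mid a\ge 0,\ a+b\ge 0\}$ with multiplication $(a,b)(c,d)=(\max\{c+d,a\}-d,\ b+d)$. A subset $U\subseteq\mathcal{B}$ is called avoidable if $\mathcal{B}$ can be partitioned into two subsets $A$ and $B$ such that no element of $U$ can be written as a product $xy$ of two distinct elements $x\neq y$ both in $A$, or both in $B$. A set is unavoidable if it is not avoidable. *)

theory Defs
  imports Main
begin

definition bicyclic :: "(int \<times> int) set" where
  "bicyclic = {(a, b). a \<ge> 0 \<and> a + b \<ge> 0}"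

fun bmult :: "int \<times> int \<Rightarrow> int \<times> int \<Rightarrow> int \<times> int" where
  "bmult (a, b) (c, d) = (max (c + d) a - d, b + d)"

definition avoidable :: "(int \<times> int) set \<Rightarrow> bool" where
  "avoidable U \<longleftrightarrow> (\<exists>A B. A \<union> B = bicyclic \<and> A \<inter> B = {} \<and>
     (\<forall>x\<in>A. \<forall>y\<in>A. x \<noteq> y \<longrightarrow> bmult x y \<notin> U) \<and>
     (\<forall>x\<in>B. \<forall>y\<in>B. x \<noteq> y \<longrightarrow> bmult x y \<notin> U))"

definition unavoidable :: "(int \<times> int) set \<Rightarrow> bool" where
  "unavoidable U \<longleftrightarrow> \<not> avoidable U"

end

theory Submission
  imports Defs
begin

theorem proposition3p5:
  fixes a c :: int
  assumes "a \<ge> 2" and "even a" and "0 < c" and "2 * c < a"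
  shows "unavoidable {(a, -a), (c, -c), (0, 0)}"
proof -
  let ?U = "{(a, -a), (c, -c), (0, 0)}"
  have p1: "bmult (a,-a) (0,0) \<in> ?U" using assms by simp
  have p2: "bmult (c,-c) (0,0) \<in> ?U" using assms by simp
  have p3: "bmult (c,-c) (a-c,-(a-c)) \<in> ?U" using assms by (simp add: max_def)
  have p4: "bmult (a-c,-(a-c)) (0,a-c) \<in> ?U" using assms by (simp add: max_def)
  have p5: "bmult (a,-a) (0,a-c) \<in> ?U" using assms by (simp add: max_def)
  have m: "(a,-a) \<in> bicyclic" "(c,-c) \<in> bicyclic" "(0,0) \<in> bicyclic"
    "(a-c,-(a-c)) \<in> bicyclic" "(0,a-c) \<in> bicyclic"
    using assms by (auto simp: bicyclic_def)
  have d: "(a,-a) \<noteq> (0,0)" "(c,-c) \<noteq> (0,0)" "(c,-c) \<noteq> (a-c,-(a-c))"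
    "(a-c,-(a-c)) \<noteq> (0,a-c)" "(a,-a) \<noteq> (0,a-c)" using assms by auto
  show ?thesis unfolding unavoidable_def avoidable_def
  proof
    assume "\<exists>A B. A \<union> B = bicyclic \<and> A \<inter> B = {} \<and>
     (\<forall>x\<in>A. \<forall>y\<in>A. x \<noteq> y \<longrightarrow> bmult x y \<notin> ?U) \<and>
     (\<forall>x\<in>B. \<forall>y\<in>B. x \<noteq> y \<longrightarrow> bmult x y \<notin> ?U)"
    then obtain A B where AB: "A \<union> B = bicyclic" "A \<inter> B = {}"
      and hA: "\<forall>x\<in>A. \<forall>y\<in>A. x \<noteq> y \<longrightarrow> bmult x y \<notin> ?U"
      and hB: "\<forall>x\<in>B. \<forall>y\<in>B. x \<noteq> y \<longrightarrow> bmult x y \<notin> ?U" by blast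
    have c1: "x \<in> A \<or> x \<in> B" if "x \<in> bicyclic" for x using AB that by blast
    have c2: "\<not> (x \<in> A \<and> x \<in> B)" for x using AB by blast
    have e1: "\<not> ((a,-a) \<in> A \<longleftrightarrow> (0,0) \<in> A)"
      using hA hB p1 d(1) c1[OF m(1)] c1[OF m(3)] c2 by metis
    have e2: "\<not> ((c,-c) \<in> A \<longleftrightarrow> (0,0) \<in> A)"
      using hA hB p2 d(2) c1[OF m(2)] c1[OF m(3)] c2 by metis
    have e3: "\<not> ((c,-c) \<in> A \<longleftrightarrow> (a-c,-(a-c)) \<in> A)"
      using hA hB p3 d(3) c1[OF m(2)] c1[OF m(4)] c2 by metis
    have e4: "\<not> ((a-c,-(a-c)) \<in> A \<longleftrightarrow> (0,a-c) \<in> A)"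
      using hA hB p4 d(4) c1[OF m(4)] c1[OF m(5)] c2 by metis
    have e5: "\<not> ((a,-a) \<in> A \<longleftrightarrow> (0,a-c) \<in> A)"
      using hA hB p5 d(5) c1[OF m(1)] c1[OF m(5)] c2 by metis
    show False using e1 e2 e3 e4 e5 by blast
  qed
qed

end
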